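(* Let $F:\mathbb{R}^n\rightrightarrows\mathbb{R}^n$ be a (possibly multi-valued) mapping and consider the system $x_{t+1}=x_t+u_t$, $y_t\in F(x_t+u_t)$, $t\in\mathbb{N}_0$, with $x_t,u_t,y_t\in\mathbb{R}^n$. This system is cyclo-passive if and only if $F$ is cyclically monotone.
   Context: A trajectory $t\mapsto(x_t,u_t,y_t)$ is admissible if $x_{t+1}=x_t+u_t$ and $y_t\in F(x_t+u_t)$ for all $t\in\mathbb{N}_0$. The system is cyclo-passive if $\sum_{t=t_1}^{t_2-1}u_t^\top y_t\ge 0$ holds for all $t_1,t_2\in\mathbb{N}_0$ with $t_1\le t_2$ and all admissible trajectories satisfying $x_{t_2}=x_{t_1}$. The mapping $F$ is cyclically monotone if $\sum_{j=0}^m w_j^\top(v_j-v_{j+1})\ge 0$ for every $m\in\mathbb{N}_0$, all points $v_0,\ldots,v_m\in\mathbb{R}^n$, all $w_j\in F(v_j)$ ($j=0,\dots,m$), where $v_{m+1}:=v_0$. *)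

theory Defs
  imports "HOL-Analysis.Analysis"
begin

definition admissible ::
  "(real^'n \<Rightarrow> (real^'n) set) \<Rightarrow> (nat \<Rightarrow> real^'n) \<Rightarrow> (nat \<Rightarrow> real^'n) \<Rightarrow> (nat \<Rightarrow> real^'n) \<Rightarrow> bool"
  where "admissible F x u y \<longleftrightarrow>
    (\<forall>t. x (Suc t) = x t + u t \<and> y t \<in> F (x t + u t))"

definition cyclo_passive :: "(real^'n \<Rightarrow> (real^'n) set) \<Rightarrow> bool"
  where "cyclo_passive F \<longleftrightarrow>
    (\<forall>x u y t1 t2. admissible F x u y \<and> t1 \<le> t2 \<and> x t2 = x t1 \<longrightarrow>
       (\<Sum>t\<in>{t1..<t2}. u t \<bullet> y t) \<ge> 0)"

definition cyclically_monotone :: "(real^'n \<Rightarrow> (real^'n) set) \<Rightarrow> bool"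
  where "cyclically_monotone F \<longleftrightarrow>
    (\<forall>(m::nat) (v::nat \<Rightarrow> real^'n) (w::nat \<Rightarrow> real^'n).
       (\<forall>j\<le>m. w j \<in> F (v j)) \<longrightarrow>
       (\<Sum>j\<le>m. w j \<bullet> (v j - (if j = m then v 0 else v (Suc j)))) \<ge> 0)"

end

theory Submission
  imports Defs
begin

lemma dir1:
  fixes F :: "real^'n \<Rightarrow> (real^'n) set"
  assumes cp: "cyclo_passive F"
  shows "cyclically_monotone F"
  unfolding cyclically_monotone_def
proof (intro allI impI)
  fix m :: nat and v w :: "nat \<Rightarrow> real^'n"
  assume W: "\<forall>j\<le>m. w j \<in> F (v j)"
  define g where "g t = (Suc m - t mod Suc m) mod Suc m" for t
  have gle: "g t \<le> m" for t unfolding g_def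
    using less_Suc_eq_le mod_less_divisor zero_less_Suc by blast
  define x where "x t = v (g t)" for t
  define u where "u t = x (Suc t) - x t" for t
  define y where "y t = w (g (Suc t))" for t
  have adm: "admissible F x u y"
    unfolding admissible_def u_def y_def using W gle x_def by auto
  have g0: "g 0 = 0" unfolding g_def by simp
  have gS: "g (Suc m) = 0" unfolding g_def by simp
  have per: "x (Suc m) = x 0" unfolding x_def using g0 gS by simp
  have "(\<Sum>t\<in>{0..<Suc m}. u t \<bullet> y t) \<ge> 0"
  proof -
    have "(0::nat) \<le> Suc m" by simp
    then show ?thesis using cp adm per unfolding cyclo_passive_def by blast
  qed
  moreover have "(\<Sum>t\<in>{0..<Suc m}. u t \<bullet> y t)
     = (\<Sum>j\<le>m. w j \<bullet> (v j - (if j = m then v 0 else v (Suc j))))"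
  proof (rule sum.reindex_bij_witness[where i="\<lambda>t. m - t" and j="\<lambda>t. m - t"])
    fix t assume t: "t \<in> {0..<Suc m}"
    have a: "g (Suc t) = m - t" using t
    proof (cases "t = m")
      case True then show ?thesis by (simp add: g_def)
    next
      case False then have "t < m" using t by simp
      then show ?thesis by (simp add: g_def)
    qed
    have b: "g t = (if t = 0 then 0 else Suc (m - t))" unfolding g_def using t
      by (auto simp: Suc_diff_le)
    show "w (m - t) \<bullet> (v (m - t) - (if m - t = m then v 0 else v (Suc (m - t)))) = u t \<bullet> y t"
      unfolding u_def y_def x_def using a b t
      by (auto simp: inner_commute)
  qed auto
  ultimately show "(\<Sum>j\<le>m. w j \<bullet> (v j - (if j = m then v 0 else v (Suc j)))) \<ge> 0" by simp
qed

lemma dir2: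
  fixes F :: "real^'n \<Rightarrow> (real^'n) set"
  assumes cm: "cyclically_monotone F"
  shows "cyclo_passive F"
  unfolding cyclo_passive_def
proof (intro allI impI, elim conjE)
  fix x u y :: "nat \<Rightarrow> real^'n" and t1 t2 :: nat
  assume adm: "admissible F x u y" and le: "t1 \<le> t2" and eq: "x t2 = x t1"
  show "(\<Sum>t\<in>{t1..<t2}. u t \<bullet> y t) \<ge> 0"
  proof (cases "t1 = t2")
    case True then show ?thesis by simp
  next
    case False
    with le have lt: "t1 < t2" by simp
    define m where "m = t2 - t1 - 1"
    define v where "v j = x (t2 - j)" for j
    define w where "w j = y (t2 - 1 - j)" for j
    have xs: "x (Suc t) = x t + u t" "y t \<in> F (x t + u t)" for t
      using adm unfolding admissible_def by auto
    have W: "\<forall>j\<le>m. w j \<in> F (v j)"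
    proof (intro allI impI)
      fix j assume "j \<le> m"
      then have "Suc (t2 - 1 - j) = t2 - j" using lt m_def by auto
      then show "w j \<in> F (v j)" unfolding w_def v_def using xs by metis
    qed
    have "(\<Sum>j\<le>m. w j \<bullet> (v j - (if j = m then v 0 else v (Suc j)))) \<ge> 0"
      using cm W unfolding cyclically_monotone_def by blast
    moreover have "(\<Sum>t\<in>{t1..<t2}. u t \<bullet> y t) =
        (\<Sum>j\<le>m. w j \<bullet> (v j - (if j = m then v 0 else v (Suc j))))"
    proof (rule sum.reindex_bij_witness[where i="\<lambda>t. t2 - 1 - t" and j="\<lambda>j. t2 - 1 - j"])
      fix t assume t: "t \<in> {t1..<t2}"
      have e1: "v (t2 - 1 - t) = x (Suc t)" using t
      proof -
        have "t2 - (t2 - 1 - t) = Suc t" using t by auto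
        then show ?thesis by (simp add: v_def)
      qed
      have e2: "(if t2 - 1 - t = m then v 0 else v (Suc (t2 - 1 - t))) = x t"
      proof (cases "t = t1")
        case True then show ?thesis using eq lt by (simp add: v_def m_def)
      next
        case False then have "t2 - 1 - t \<noteq> m" "t2 - Suc (t2 - 1 - t) = t" using t by (auto simp: m_def)
        then show ?thesis by (simp add: v_def)
      qed
      show "w (t2 - 1 - t) \<bullet> (v (t2 - 1 - t) - (if t2 - 1 - t = m then v 0 else v (Suc (t2 - 1 - t))))
          = u t \<bullet> y t"
        unfolding e1 e2 w_def using t xs(1)[of t]
        by (auto simp: inner_commute)
    qed (use lt in \<open>auto simp: m_def\<close>)
    ultimately show ?thesis by simp
  qed
qed

theorem lemma4:
  fixes F :: "real^'n \<Rightarrow> (real^'n) set"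
  shows "cyclo_passive F \<longleftrightarrow> cyclically_monotone F"
  using dir1 dir2 by blast

end
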